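(* Let $G=(V,E,s_0,s_1)$ be a switch graph and $o,d\in V$ with $o\neq d$. If there exists a switching flow $\mathbf{x}$, then $\textsc{Run}(G,o,d)$ terminates, and its run profile satisfies $\mathbf{x}(G,o,d)\le\mathbf{x}$ componentwise.
   Context: A switch graph is a 4-tuple $G=(V,E,s_0,s_1)$ where $V$ is a finite vertex set, $s_0,s_1:V\to V$, and $E=\{(v,s_0(v)):v\in V\}\cup\{(v,s_1(v)):v\in V\}$ (loops allowed; possibly $s_0(v)=s_1(v)$). The procedure $\textsc{Run}(G,o,d)$: maintain arrays $\mathtt{s\_curr},\mathtt{s\_next}$ indexed by $V$, initially $\mathtt{s\_curr}[v]=s_0(v)$, $\mathtt{s\_next}[v]=s_1(v)$; set $v:=o$; while $v\neq d$: $w:=\mathtt{s\_curr}[v]$, swap $\mathtt{s\_curr}[v],\mathtt{s\_next}[v]$, $v:=w$ (traversing edge $(v,w)$). When the run terminates, its run profile $\mathbf{x}(G,o,d):E\to\mathbb{N}_0$ assigns to each edge the number of times it was traversed. For $v\in V$, $E^+(v)$ and $E^-(v)$ denote the outgoing and incoming edges of $v$. A switching flow is a function $\mathbf{x}:E\to\mathbb{N}_0$, $e\mapsto x_e$, such that for all $v\in V$: (a) $\sum_{e\in E^+(v)}x_e-\sum_{e\in E^-(v)}x_e$ equals $1$ if $v=o$, $-1$ if $v=d$, and $0$ otherwise; and (b) $0\le x_{(v,s_1(v))}\le x_{(v,s_0(v))}\le x_{(v,s_1(v))}+1$. *)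

theory Defs
  imports Main
begin

definition switch_graph :: "'v set \<Rightarrow> ('v \<Rightarrow> 'v) \<Rightarrow> ('v \<Rightarrow> 'v) \<Rightarrow> bool" where
  "switch_graph V s0 s1 \<longleftrightarrow> finite V \<and> s0 ` V \<subseteq> V \<and> s1 ` V \<subseteq> V"

definition sg_edges :: "'v set \<Rightarrow> ('v \<Rightarrow> 'v) \<Rightarrow> ('v \<Rightarrow> 'v) \<Rightarrow> ('v \<times> 'v) set" where
  "sg_edges V s0 s1 = {(v, s0 v) | v. v \<in> V} \<union> {(v, s1 v) | v. v \<in> V}"

definition out_edges :: "('v \<times> 'v) set \<Rightarrow> 'v \<Rightarrow> ('v \<times> 'v) set" where
  "out_edges E v = {e \<in> E. fst e = v}"

definition in_edges :: "('v \<times> 'v) set \<Rightarrow> 'v \<Rightarrow> ('v \<times> 'v) set" where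
  "in_edges E v = {e \<in> E. snd e = v}"

text \<open>Switching flow from orig to dest (values of x outside the edge set are irrelevant).\<close>
definition switching_flow ::
  "'v set \<Rightarrow> ('v \<Rightarrow> 'v) \<Rightarrow> ('v \<Rightarrow> 'v) \<Rightarrow> 'v \<Rightarrow> 'v \<Rightarrow> ('v \<times> 'v \<Rightarrow> nat) \<Rightarrow> bool" where
  "switching_flow V s0 s1 orig dest x \<longleftrightarrow>
     (\<forall>v\<in>V.
        int (\<Sum>e\<in>out_edges (sg_edges V s0 s1) v. x e) - int (\<Sum>e\<in>in_edges (sg_edges V s0 s1) v. x e)
          = (if v = orig then 1 else if v = dest then -1 else 0)
      \<and> x (v, s1 v) \<le> x (v, s0 v) \<and> x (v, s0 v) \<le> x (v, s1 v) + 1)"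

text \<open>State of Run: (current vertex, s_curr array, s_next array). One loop iteration.\<close>
fun run_step :: "'v \<times> ('v \<Rightarrow> 'v) \<times> ('v \<Rightarrow> 'v) \<Rightarrow> 'v \<times> ('v \<Rightarrow> 'v) \<times> ('v \<Rightarrow> 'v)" where
  "run_step (v, cur, nxt) = (cur v, cur(v := nxt v), nxt(v := cur v))"

text \<open>Vertex occupied after i loop iterations (ignoring the loop guard).\<close>
definition run_pos :: "('v \<Rightarrow> 'v) \<Rightarrow> ('v \<Rightarrow> 'v) \<Rightarrow> 'v \<Rightarrow> nat \<Rightarrow> 'v" where
  "run_pos s0 s1 orig i = fst ((run_step ^^ i) (orig, s0, s1))"

definition run_terminates :: "('v \<Rightarrow> 'v) \<Rightarrow> ('v \<Rightarrow> 'v) \<Rightarrow> 'v \<Rightarrow> 'v \<Rightarrow> bool" where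
  "run_terminates s0 s1 orig dest \<longleftrightarrow> (\<exists>n. run_pos s0 s1 orig n = dest)"

definition run_length :: "('v \<Rightarrow> 'v) \<Rightarrow> ('v \<Rightarrow> 'v) \<Rightarrow> 'v \<Rightarrow> 'v \<Rightarrow> nat" where
  "run_length s0 s1 orig dest = (LEAST n. run_pos s0 s1 orig n = dest)"

definition run_profile :: "('v \<Rightarrow> 'v) \<Rightarrow> ('v \<Rightarrow> 'v) \<Rightarrow> 'v \<Rightarrow> 'v \<Rightarrow> 'v \<times> 'v \<Rightarrow> nat" where
  "run_profile s0 s1 orig dest e =
     card {i. i < run_length s0 s1 orig dest \<and>
              (run_pos s0 s1 orig i, run_pos s0 s1 orig (Suc i)) = e}"

end

theory Submission imports Defs begin

context fixes s0 s1 :: "'v \<Rightarrow> 'v" and orig :: 'v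
begin

definition vis :: "nat \<Rightarrow> 'v \<Rightarrow> nat" where
  "vis T w = (\<Sum>j<T. if run_pos s0 s1 orig j = w then 1 else 0)"

definition cnt :: "nat \<Rightarrow> 'v \<times> 'v \<Rightarrow> nat" where
  "cnt T e = (\<Sum>i<T. if (run_pos s0 s1 orig i, run_pos s0 s1 orig (Suc i)) = e then 1 else 0)"

lemma state_char:
  "fst (snd ((run_step ^^ i) (orig, s0, s1))) w = (if even (vis i w) then s0 w else s1 w) \<and>
   snd (snd ((run_step ^^ i) (orig, s0, s1))) w = (if even (vis i w) then s1 w else s0 w)"
proof (induction i arbitrary: w)
  case 0
  then show ?case by (simp add: vis_def)
next
  case (Suc i)
  obtain v cur nxt where eq: "(run_step ^^ i) (orig,s0,s1) = (v,cur,nxt)" by (cases "(run_step ^^ i) (orig,s0,s1)") auto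
  have pv: "run_pos s0 s1 orig i = v" using eq by (simp add: run_pos_def)
  have vs: "vis (Suc i) w = vis i w + (if v = w then 1 else 0)" for w by (simp add: vis_def pv)
  have c: "cur w = (if even (vis i w) then s0 w else s1 w)" "nxt w = (if even (vis i w) then s1 w else s0 w)" for w
    using Suc.IH[of w] eq by auto
  show ?case using eq c vs by auto
qed

lemma pos_suc:
  "run_pos s0 s1 orig (Suc i) = (if even (vis i (run_pos s0 s1 orig i)) then s0 else s1) (run_pos s0 s1 orig i)"
proof -
  obtain v cur nxt where eq: "(run_step ^^ i) (orig,s0,s1) = (v,cur,nxt)" by (cases "(run_step ^^ i) (orig,s0,s1)") auto
  have pv: "run_pos s0 s1 orig i = v" using eq by (simp add: run_pos_def)
  have "run_pos s0 s1 orig (Suc i) = cur v" using eq by (simp add: run_pos_def)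
  then show ?thesis using state_char[of i v] eq pv by auto
qed

lemma vis_Suc: "vis (Suc T) w = vis T w + (if run_pos s0 s1 orig T = w then 1 else 0)"
  by (simp add: vis_def)
lemma cnt_Suc: "cnt (Suc T) e = cnt T e + (if (run_pos s0 s1 orig T, run_pos s0 s1 orig (Suc T)) = e then 1 else 0)"
  by (simp add: cnt_def)

lemma cnt_split:
  "(s0 v \<noteq> s1 v \<longrightarrow> cnt T (v, s0 v) = (vis T v + 1) div 2 \<and> cnt T (v, s1 v) = vis T v div 2) \<and>
   (s0 v = s1 v \<longrightarrow> cnt T (v, s0 v) = vis T v)"
proof (induction T)
  case 0
  then show ?case by (simp add: cnt_def vis_def)
next
  case (Suc T)
  show ?case
  proof (cases "run_pos s0 s1 orig T = v")
    case True
    have ps: "run_pos s0 s1 orig (Suc T) = (if even (vis T v) then s0 v else s1 v)"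
      using pos_suc[of T] True by simp
    show ?thesis
    proof (cases "even (vis T v)")
      case True
      then show ?thesis using Suc.IH \<open>run_pos s0 s1 orig T = v\<close> ps
        by (simp add: cnt_Suc vis_Suc; presburger)
    next
      case False
      then show ?thesis using Suc.IH \<open>run_pos s0 s1 orig T = v\<close> ps
        by (simp add: cnt_Suc vis_Suc; presburger)
    qed
  next
    case False
    then show ?thesis using Suc.IH unfolding cnt_Suc vis_Suc by auto
  qed
qed


lemma pos_in_V:
  assumes "switch_graph V s0 s1" "orig \<in> V"
  shows "run_pos s0 s1 orig i \<in> V"
proof (induction i)
  case 0
  then show ?case using assms by (simp add: run_pos_def)
next
  case (Suc i)
  then show ?case using assms(1) pos_suc[of i] unfolding switch_graph_def by auto
qed

lemma step_in_E:
  assumes "switch_graph V s0 s1" "orig \<in> V"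
  shows "(run_pos s0 s1 orig i, run_pos s0 s1 orig (Suc i)) \<in> sg_edges V s0 s1"
  using pos_in_V[OF assms, of i] pos_suc[of i] unfolding sg_edges_def by auto

lemma finite_E: "switch_graph V s0 s1 \<Longrightarrow> finite (sg_edges V s0 s1)"
  unfolding switch_graph_def sg_edges_def by auto

lemma sum_cnt:
  assumes "finite A"
  shows "(\<Sum>e\<in>A. cnt T e) = (\<Sum>i<T. if (run_pos s0 s1 orig i, run_pos s0 s1 orig (Suc i)) \<in> A then 1 else 0)"
  unfolding cnt_def
  apply (subst sum.swap)
  apply (rule sum.cong, simp)
  using assms by (simp add: sum.delta)

lemma sum_in:
  assumes "switch_graph V s0 s1" "orig \<in> V"
  shows "(\<Sum>e\<in>in_edges (sg_edges V s0 s1) v. cnt T e) = (\<Sum>i<T. if run_pos s0 s1 orig (Suc i) = v then 1 else 0)"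
proof -
  have "finite (in_edges (sg_edges V s0 s1) v)" using finite_E[OF assms(1)] unfolding in_edges_def by auto
  then show ?thesis using step_in_E[OF assms] by (simp add: sum_cnt in_edges_def)
qed

lemma sum_all:
  assumes "switch_graph V s0 s1" "orig \<in> V"
  shows "(\<Sum>e\<in>sg_edges V s0 s1. cnt T e) = T"
  using step_in_E[OF assms] finite_E[OF assms(1)] by (simp add: sum_cnt)

lemma out_eq:
  assumes "v \<in> V"
  shows "out_edges (sg_edges V s0 s1) v = {(v, s0 v), (v, s1 v)}"
  using assms unfolding out_edges_def sg_edges_def by auto

lemma vis_entries:
  "vis (Suc T) v = (if v = orig then 1 else 0) + (\<Sum>i<T. if run_pos s0 s1 orig (Suc i) = v then 1 else 0)"
proof (induction T)
  case 0
  then show ?case by (simp add: vis_def run_pos_def)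
next
  case (Suc T)
  then show ?case by (simp add: vis_Suc[of "Suc T"])
qed


lemma arith_help: "int (A::nat) - int B = (if c then 1 else 0) \<Longrightarrow> (m::nat) = (if c then 1 else 0) + C \<Longrightarrow> C \<le> B \<Longrightarrow> m \<le> A"
  by (cases c) auto

lemma invariant:
  assumes sg: "switch_graph V s0 s1" and oV: "orig \<in> V"
    and fl: "switching_flow V s0 s1 orig dest x"
  shows "(\<forall>i<T. run_pos s0 s1 orig i \<noteq> dest) \<Longrightarrow> (\<forall>e\<in>sg_edges V s0 s1. cnt T e \<le> x e)"
proof (induction T)
  case 0
  then show ?case by (simp add: cnt_def)
next
  case (Suc T)
  define v where "v = run_pos s0 s1 orig T"
  define w where "w = run_pos s0 s1 orig (Suc T)"
  have vd: "v \<noteq> dest" using Suc.prems v_def by auto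
  have vV: "v \<in> V" using pos_in_V[OF sg oV] v_def by auto
  have IH: "\<forall>e\<in>sg_edges V s0 s1. cnt T e \<le> x e" using Suc by auto
  have w01: "w = s0 v \<or> w = s1 v" using pos_suc[of T] v_def w_def by auto
  let ?E = "sg_edges V s0 s1"
  have fv: "int (\<Sum>e\<in>out_edges ?E v. x e) - int (\<Sum>e\<in>in_edges ?E v. x e) = (if v = orig then 1 else 0)"
    and x10: "x (v, s1 v) \<le> x (v, s0 v)" and x01: "x (v, s0 v) \<le> x (v, s1 v) + 1"
    using fl vV vd unfolding switching_flow_def by auto
  define m where "m = vis (Suc T) v"
  have meq: "m = (if v = orig then 1 else 0) + (\<Sum>e\<in>in_edges ?E v. cnt T e)"
    unfolding m_def vis_entries sum_in[OF sg oV] ..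
  have sle: "(\<Sum>e\<in>in_edges ?E v. cnt T e) \<le> (\<Sum>e\<in>in_edges ?E v. x e)"
    using IH by (intro sum_mono) (auto simp: in_edges_def)
  have m_le: "m \<le> (\<Sum>e\<in>out_edges ?E v. x e)" 
    using arith_help[OF fv meq sle] .
  have outx: "(\<Sum>e\<in>out_edges ?E v. x e) = (if s0 v = s1 v then x (v, s0 v) else x (v, s0 v) + x (v, s1 v))"
    using out_eq[OF vV] by auto
  show ?case
  proof
    fix e assume eE: "e \<in> ?E"
    show "cnt (Suc T) e \<le> x e"
    proof (cases "e = (v, w)")
      case False
      then show ?thesis using IH eE by (simp add: cnt_Suc v_def w_def)
    next
      case True
      show ?thesis
      proof (rule ccontr)
        assume "\<not> ?thesis"
        moreover have "cnt T (v, w) \<le> x (v, w)" using IH eE True by auto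
        ultimately have c: "cnt (Suc T) (v, w) = x (v, w) + 1" using True by (simp add: cnt_Suc v_def w_def)
        have cs: "(s0 v \<noteq> s1 v \<longrightarrow> cnt (Suc T) (v, s0 v) = (m + 1) div 2 \<and> cnt (Suc T) (v, s1 v) = m div 2) \<and>
           (s0 v = s1 v \<longrightarrow> cnt (Suc T) (v, s0 v) = m)" using cnt_split[of v "Suc T"] m_def by simp
        have "m \<ge> (\<Sum>e\<in>out_edges ?E v. x e) + 1"
          unfolding outx using w01 c cs x10 x01 by (cases "s0 v = s1 v"; elim disjE) auto
        then show False using m_le by simp
      qed
    qed
  qed
qed

end

lemma card_sum: "card {i. i < (n::nat) \<and> Q i} = (\<Sum>i<n. if Q i then 1 else 0)"
proof (induction n)
  case 0
  then show ?case by simp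
next
  case (Suc n)
  have "{i. i < Suc n \<and> Q i} = (if Q n then insert n {i. i < n \<and> Q i} else {i. i < n \<and> Q i})"
    by (auto simp: less_Suc_eq)
  then show ?case using Suc by simp
qed

theorem lemma1:
  fixes V :: "'v set" and s0 s1 :: "'v \<Rightarrow> 'v" and orig dest :: 'v
    and x :: "'v \<times> 'v \<Rightarrow> nat"
  assumes "switch_graph V s0 s1"
    and "orig \<in> V" and "dest \<in> V" and "orig \<noteq> dest"
    and "switching_flow V s0 s1 orig dest x"
  shows "run_terminates s0 s1 orig dest \<and>
         (\<forall>e\<in>sg_edges V s0 s1. run_profile s0 s1 orig dest e \<le> x e)"
proof
  show trm: "run_terminates s0 s1 orig dest"
  proof (rule ccontr)
    assume "\<not> ?thesis"
    then have nd: "\<forall>i. run_pos s0 s1 orig i \<noteq> dest" unfolding run_terminates_def by auto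
    define S where "S = (\<Sum>e\<in>sg_edges V s0 s1. x e)"
    have inv: "\<forall>e\<in>sg_edges V s0 s1. cnt s0 s1 orig (Suc S) e \<le> x e"
      using invariant[OF assms(1,2,5)] nd by blast
    have "Suc S = (\<Sum>e\<in>sg_edges V s0 s1. cnt s0 s1 orig (Suc S) e)"
      using sum_all[OF assms(1,2)] by simp
    also have "\<dots> \<le> (\<Sum>e\<in>sg_edges V s0 s1. x e)" using inv by (intro sum_mono) auto
    also have "\<dots> = S" unfolding S_def ..
    finally show False by simp
  qed
  define L where "L = run_length s0 s1 orig dest"
  have "\<forall>i<L. run_pos s0 s1 orig i \<noteq> dest"
    using not_less_Least unfolding L_def run_length_def by blast
  then have inv: "\<forall>e\<in>sg_edges V s0 s1. cnt s0 s1 orig L e \<le> x e"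
    using invariant[OF assms(1,2,5)] by blast
  have "run_profile s0 s1 orig dest e = cnt s0 s1 orig L e" for e
    unfolding run_profile_def cnt_def L_def[symmetric] card_sum ..
  then show "\<forall>e\<in>sg_edges V s0 s1. run_profile s0 s1 orig dest e \<le> x e" using inv by simp
qed

end
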